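(* Let $\{a_n\}_{n\in\mathbb Z}$ be i.i.d. random variables with values in $\{1,2,\dots\}$ with $\mathbb E[a_0]<\infty$, and let $N_0=\#\{m\in\mathbb Z: m<0,\ m+a_m>0\}+1$. Then for all $t\in\mathbb R$, $$\mathbb E[e^{tN_0}]=e^{t}\prod_{i=1}^{\infty}\left(e^{t}\,\mathbb P[a_0>i]+\mathbb P[a_0\le i]\right),$$ and $\mathbb E[e^{tN_0}]<\infty$ for all $t\in\mathbb R$. *)

theory Defs
  imports "HOL-Probability.Probability"
begin

text \<open>N_0 = #{m in Z : m < 0, m + a_m > 0} + 1 (evaluated pointwise at the sample x).
  The set is almost surely finite; on the null set where it is infinite, card gives 0.\<close>
definition N0 :: "(int \<Rightarrow> 'a \<Rightarrow> nat) \<Rightarrow> 'a \<Rightarrow> nat" where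
  "N0 a x = card {m::int. m < 0 \<and> m + int (a m x) > 0} + 1"

end

theory Submission
  imports Defs
begin

lemma card_lt_bound: "real (card {i. i < n \<and> Suc i < (k::nat)}) \<le> real k"
proof -
  have "{i. i < n \<and> Suc i < k} \<subseteq> {..<k}" by auto
  hence "card {i. i < n \<and> Suc i < k} \<le> card {..<k}" by (intro card_mono) auto
  thus ?thesis by simp
qed

lemma (in prob_space) summable_tail:
  assumes X[measurable]: "X \<in> measurable M (count_space UNIV)"
    and int: "integrable M (\<lambda>x. real (X x :: nat))"
  shows "summable (\<lambda>i. measure M {x\<in>space M. X x > Suc i})"
proof (rule summableI_nonneg_bounded)
  fix n
  have ms[measurable]: "\<And>i. {x \<in> space M. Suc i < X x} \<in> sets M" by measurable
  have "(\<Sum>i<n. measure M {x\<in>space M. X x > Suc i})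
      = (\<Sum>i<n. \<integral>x. indicator {x\<in>space M. X x > Suc i} x \<partial>M)"
    by simp
  also have "\<dots> = (\<integral>x. (\<Sum>i<n. indicator {x\<in>space M. X x > Suc i} x) \<partial>M)"
    by (subst Bochner_Integration.integral_sum) (auto intro!: integrable_real_indicator simp: emeasure_eq_measure)
  also have "\<dots> \<le> (\<integral>x. real (X x) \<partial>M)"
  proof (rule integral_mono)
    show "integrable M (\<lambda>x. \<Sum>i<n. indicator {x\<in>space M. X x > Suc i} x :: real)" by (auto intro!: integrable_real_indicator simp: emeasure_eq_measure)
    show "integrable M (\<lambda>x. real (X x))" by fact
    fix x assume x: "x \<in> space M"
    have "(\<Sum>i<n. indicator {x\<in>space M. X x > Suc i} x :: real) = (\<Sum>i<n. if Suc i < X x then 1 else 0)"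
      using x by (intro sum.cong) (auto simp: indicator_def)
    also have "\<dots> = real (card {i. i < n \<and> Suc i < X x})"
      by (simp add: sum.If_cases Int_def lessThan_def conj_commute)
    also have "\<dots> \<le> real (X x)" by (rule card_lt_bound)
    finally show "(\<Sum>i<n. indicator {x\<in>space M. X x > Suc i} x :: real) \<le> real (X x)" .
  qed
  finally show "(\<Sum>i<n. measure M {x\<in>space M. X x > Suc i}) \<le> (\<integral>x. real (X x) \<partial>M)" .
qed simp


lemma mono_conv_nn:
  fixes F :: "nat \<Rightarrow> 'a \<Rightarrow> ennreal"
  assumes meas[measurable]: "\<And>n. F n \<in> borel_measurable M"
    and mono: "(\<forall>x. incseq (\<lambda>n. F n x)) \<or> ((\<forall>x. decseq (\<lambda>n. F n x)) \<and> (\<integral>\<^sup>+x. F 0 x \<partial>M) < \<infinity>)"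
    and lim: "AE x in M. (\<lambda>n. F n x) \<longlonglongrightarrow> L x"
    and ilim: "(\<lambda>n. \<integral>\<^sup>+x. F n x \<partial>M) \<longlonglongrightarrow> I"
  shows "(\<integral>\<^sup>+x. L x \<partial>M) = I"
  using mono
proof
  assume inc: "\<forall>x. incseq (\<lambda>n. F n x)"
  have "(\<integral>\<^sup>+x. L x \<partial>M) = (\<integral>\<^sup>+x. (SUP n. F n x) \<partial>M)"
  proof (rule nn_integral_cong_AE)
    show "AE x in M. L x = (SUP n. F n x)"
      using lim by eventually_elim (metis LIMSEQ_SUP LIMSEQ_unique inc)
  qed
  also have "\<dots> = (SUP n. \<integral>\<^sup>+x. F n x \<partial>M)"
    by (rule nn_integral_monotone_convergence_SUP) (use inc in \<open>auto simp: incseq_def le_fun_def\<close>)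
  also have "\<dots> = I"
  proof -
    have "incseq (\<lambda>n. \<integral>\<^sup>+x. F n x \<partial>M)"
      using inc by (auto simp: incseq_def intro!: nn_integral_mono)
    thus ?thesis by (metis LIMSEQ_SUP LIMSEQ_unique ilim)
  qed
  finally show ?thesis .
next
  assume dec: "(\<forall>x. decseq (\<lambda>n. F n x)) \<and> (\<integral>\<^sup>+x. F 0 x \<partial>M) < \<infinity>"
  have "(\<integral>\<^sup>+x. L x \<partial>M) = (\<integral>\<^sup>+x. (INF n. F n x) \<partial>M)"
  proof (rule nn_integral_cong_AE)
    show "AE x in M. L x = (INF n. F n x)"
      using lim by eventually_elim (metis LIMSEQ_INF LIMSEQ_unique dec)
  qed
  also have "\<dots> = (INF n. \<integral>\<^sup>+x. F n x \<partial>M)"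
    by (rule nn_integral_monotone_convergence_INF_AE') (use dec in \<open>auto simp: decseq_def\<close>)
  also have "\<dots> = I"
  proof -
    have "decseq (\<lambda>n. \<integral>\<^sup>+x. F n x \<partial>M)"
      using dec by (auto simp: decseq_def intro!: nn_integral_mono)
    thus ?thesis by (metis LIMSEQ_INF LIMSEQ_unique ilim)
  qed
  finally show ?thesis .
qed

theorem mainTheorem4:
  fixes M :: "'a measure" and a :: "int \<Rightarrow> 'a \<Rightarrow> nat" and t :: real
  assumes "prob_space M"
    and "prob_space.indep_vars M (\<lambda>_. count_space UNIV) a UNIV"
    and "\<And>n. distr M (count_space UNIV) (a n) = distr M (count_space UNIV) (a 0)"
    and "\<And>n x. x \<in> space M \<Longrightarrow> a n x \<ge> 1"
    and "integrable M (\<lambda>x. real (a 0 x))"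
  shows "convergent_prod (\<lambda>i. exp t * measure M {x \<in> space M. a 0 x > Suc i}
                               + measure M {x \<in> space M. a 0 x \<le> Suc i})
    \<and> (\<integral>\<^sup>+ x. ennreal (exp (t * real (N0 a x))) \<partial>M)
        = ennreal (exp t * (\<Prod>i. exp t * measure M {x \<in> space M. a 0 x > Suc i}
                               + measure M {x \<in> space M. a 0 x \<le> Suc i}))
    \<and> (\<integral>\<^sup>+ x. ennreal (exp (t * real (N0 a x))) \<partial>M) < \<infinity>"
proof -
  interpret P: prob_space M by fact
  note indep = assms(2)
  have meas[measurable]: "\<And>m. a m \<in> measurable M (count_space UNIV)"
    using indep unfolding P.indep_vars_def by auto
  define p where "p i = measure M {x \<in> space M. a 0 x > Suc i}" for i
  define c where "c i = exp t * measure M {x \<in> space M. a 0 x > Suc i}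
                               + measure M {x \<in> space M. a 0 x \<le> Suc i}" for i
  have sump: "summable p" unfolding p_def by (rule P.summable_tail) (use assms(5) in auto)
  have c_eq: "c i = 1 + (exp t - 1) * p i" for i
  proof -
    have "{x \<in> space M. a 0 x \<le> Suc i} = space M - {x \<in> space M. a 0 x > Suc i}" by auto
    hence "measure M {x \<in> space M. a 0 x \<le> Suc i} = 1 - p i"
      unfolding p_def by (simp add: P.prob_compl)
    thus ?thesis unfolding c_def p_def by (simp add: algebra_simps)
  qed
  have p_nn: "0 \<le> p i" for i unfolding p_def by simp
  have p_le1: "p i \<le> 1" for i unfolding p_def by simp
  have c_pos: "0 < c i" for i
  proof -
    have "0 < exp t * p i + (1 - p i) \<or> p i = 1"
      using p_nn[of i] p_le1[of i] by (smt (verit) exp_gt_zero mult_nonneg_nonneg)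
    thus ?thesis unfolding c_eq by (auto simp: algebra_simps)
  qed
  have cp: "convergent_prod c"
  proof (rule abs_convergent_prod_imp_convergent_prod, rule summable_imp_abs_convergent_prod)
    show "summable (\<lambda>i. norm (c i - 1))"
      unfolding c_eq using sump p_nn by (auto simp: abs_mult intro!: summable_mult)
  qed
  have climit: "(\<lambda>n. \<Prod>i<n. c i) \<longlonglongrightarrow> prodinf c"
  proof -
    have "(\<lambda>n. \<Prod>i\<le>n. c i) \<longlonglongrightarrow> prodinf c" by (rule convergent_prod_LIMSEQ[OF cp])
    hence "(\<lambda>n. \<Prod>i<Suc n. c i) \<longlonglongrightarrow> prodinf c" by (simp add: lessThan_Suc_atMost)
    thus ?thesis by (rule LIMSEQ_imp_Suc)
  qed
  define J where "J n = {-int n..-1}" for n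
  define F where "F n x = ennreal (exp (t * real (card {m \<in> J n. 0 < m + int (a m x)} + 1)))" for n x
  define g where "g m k = (if 0 < m + int k then exp t else 1)" for m :: int and k :: nat
  have g_nn: "0 \<le> g m k" for m k unfolding g_def by simp
  have finJ: "finite (J n)" for n unfolding J_def by simp
  have Fprod: "F n x = ennreal (exp t) * (\<Prod>m\<in>J n. ennreal (g m (a m x)))" for n x
  proof -
    have "(\<Prod>m\<in>J n. g m (a m x)) = (\<Prod>m\<in>J n. if 0 < m + int (a m x) then exp t else 1)"
      unfolding g_def by simp
    also have "\<dots> = (\<Prod>m\<in>J n \<inter> {m. 0 < m + int (a m x)}. exp t) * (\<Prod>m\<in>J n \<inter> - {m. 0 < m + int (a m x)}. 1)"
      by (rule prod.If_cases[OF finJ])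
    also have "\<dots> = exp t ^ card {m \<in> J n. 0 < m + int (a m x)}"
      by (simp add: Int_def)
    finally have 1: "(\<Prod>m\<in>J n. g m (a m x)) = exp t ^ card {m \<in> J n. 0 < m + int (a m x)}" .
    have "F n x = ennreal (exp t * (\<Prod>m\<in>J n. g m (a m x)))"
      unfolding F_def 1 by (simp add: distrib_left exp_add exp_of_nat_mult[symmetric] algebra_simps)
    also have "\<dots> = ennreal (exp t) * (\<Prod>m\<in>J n. ennreal (g m (a m x)))"
      by (simp add: ennreal_mult' prod_ennreal g_nn)
    finally show ?thesis .
  qed
  have Gmeas[measurable]: "(\<lambda>x. ennreal (g m (a m x))) \<in> borel_measurable M" for m
    by measurable
  have Fmeas[measurable]: "F n \<in> borel_measurable M" for n
    unfolding Fprod[abs_def] by measurable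
  have distr_eq: "measure M {x\<in>space M. Q (a m x)} = measure M {x\<in>space M. Q (a 0 x)}" for m Q
  proof -
    have e: "{x\<in>space M. Q (a k x)} = a k -` {k. Q k} \<inter> space M" for k by auto
    have "measure M (a m -` {k. Q k} \<inter> space M) = measure (distr M (count_space UNIV) (a m)) {k. Q k}"
      by (rule measure_distr[symmetric]) auto
    also have "\<dots> = measure (distr M (count_space UNIV) (a 0)) {k. Q k}" using assms(3)[of m] by (rule arg_cong)
    also have "\<dots> = measure M (a 0 -` {k. Q k} \<inter> space M)"
      by (rule measure_distr) auto
    finally show ?thesis unfolding e .
  qed
  have Gint: "(\<integral>\<^sup>+x. ennreal (g (- int (Suc i)) (a (- int (Suc i)) x)) \<partial>M) = ennreal (c i)" for i
  proof -
    define m where "m = - int (Suc i)"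
    have "(\<integral>\<^sup>+x. ennreal (g m (a m x)) \<partial>M) = (\<integral>\<^sup>+k. ennreal (g m k) \<partial>distr M (count_space UNIV) (a m))"
      by (rule nn_integral_distr[symmetric]) auto
    also have "\<dots> = (\<integral>\<^sup>+k. ennreal (g m k) \<partial>distr M (count_space UNIV) (a 0))"
      using assms(3)[of m] by (rule arg_cong)
    also have "\<dots> = (\<integral>\<^sup>+x. ennreal (g m (a 0 x)) \<partial>M)"
      by (rule nn_integral_distr) auto
    also have "\<dots> = (\<integral>\<^sup>+x. ennreal (exp t) * indicator {x\<in>space M. a 0 x > Suc i} x
                         + indicator {x\<in>space M. a 0 x \<le> Suc i} x \<partial>M)"
      by (rule nn_integral_cong) (auto simp: g_def m_def indicator_def)
    also have "\<dots> = ennreal (exp t) * emeasure M {x\<in>space M. a 0 x > Suc i}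
                     + emeasure M {x\<in>space M. a 0 x \<le> Suc i}"
      by (subst nn_integral_add) (auto simp: nn_integral_cmult_indicator)
    also have "\<dots> = ennreal (c i)"
      unfolding c_def by (simp add: P.emeasure_eq_measure ennreal_mult' ennreal_plus[symmetric])
    finally show ?thesis unfolding m_def .
  qed
  have indepG: "P.indep_vars (\<lambda>_. borel) (\<lambda>m x. ennreal (g m (a m x))) UNIV"
    by (rule P.indep_vars_compose2[OF indep]) auto
  have Fint: "(\<integral>\<^sup>+x. F n x \<partial>M) = ennreal (exp t * (\<Prod>i<n. c i))" for n
  proof -
    have "(\<integral>\<^sup>+x. F n x \<partial>M) = ennreal (exp t) * (\<integral>\<^sup>+x. (\<Prod>m\<in>J n. ennreal (g m (a m x))) \<partial>M)"
      unfolding Fprod by (rule nn_integral_cmult) measurable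
    also have "(\<integral>\<^sup>+x. (\<Prod>m\<in>J n. ennreal (g m (a m x))) \<partial>M) = (\<Prod>m\<in>J n. \<integral>\<^sup>+x. ennreal (g m (a m x)) \<partial>M)"
      by (rule P.indep_vars_nn_integral[OF finJ P.indep_vars_subset[OF indepG]]) auto
    also have "\<dots> = (\<Prod>i<n. ennreal (c i))"
    proof (rule prod.reindex_bij_witness[of _ "\<lambda>i. - int (Suc i)" "\<lambda>m. nat (-m) - 1"])
      fix m assume "m \<in> J n"
      thus "- int (Suc (nat (-m) - 1)) = m" "nat (-m) - 1 \<in> {..<n}" unfolding J_def by auto
      show "ennreal (c (nat (-m) - 1)) = (\<integral>\<^sup>+x. ennreal (g m (a m x)) \<partial>M)"
        using Gint[of "nat (-m) - 1"] \<open>- int (Suc (nat (-m) - 1)) = m\<close> by simp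
    next
      fix i assume "i \<in> {..<n}"
      thus "nat (- (- int (Suc i))) - 1 = i" "- int (Suc i) \<in> J n" unfolding J_def by auto
    qed
    also have "\<dots> = ennreal (\<Prod>i<n. c i)"
      by (rule prod_ennreal) (use c_pos in \<open>auto intro: less_imp_le\<close>)
    finally show ?thesis by (simp add: ennreal_mult')
  qed
  define A where "A i = {x\<in>space M. Suc i < a (- int (Suc i)) x}" for i
  have A_sets[measurable]: "A i \<in> sets M" for i unfolding A_def by measurable
  have A_meas: "measure M (A i) = p i" for i
    unfolding A_def p_def by (rule distr_eq)
  have BC: "AE x in M. eventually (\<lambda>i. x \<in> space M - A i) sequentially"
    by (rule borel_cantelli_AE1) (auto simp: A_meas sump P.emeasure_eq_measure)
  have Flim: "AE x in M. (\<lambda>n. F n x) \<longlonglongrightarrow> ennreal (exp (t * real (N0 a x)))"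
    using BC
  proof eventually_elim
    case (elim x)
    then obtain N where N: "\<And>i. i \<ge> N \<Longrightarrow> x \<in> space M - A i"
      unfolding eventually_sequentially by auto
    have "F n x = ennreal (exp (t * real (N0 a x)))" if "n \<ge> N" for n
    proof -
      have "{m \<in> J n. 0 < m + int (a m x)} = {m. m < 0 \<and> 0 < m + int (a m x)}"
      proof (intro equalityI subsetI)
        fix m assume "m \<in> {m \<in> J n. 0 < m + int (a m x)}"
        thus "m \<in> {m. m < 0 \<and> 0 < m + int (a m x)}" unfolding J_def by auto
      next
        fix m assume m: "m \<in> {m. m < 0 \<and> 0 < m + int (a m x)}"
        define i where "i = nat (-m) - 1"
        have mi: "m = - int (Suc i)" using m unfolding i_def by auto
        have "i < N"
        proof (rule ccontr)
          assume "\<not> i < N"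
          hence "x \<in> space M - A i" using N by auto
          hence "\<not> Suc i < a m x" unfolding A_def mi by auto
          thus False using m mi by auto
        qed
        thus "m \<in> {m \<in> J n. 0 < m + int (a m x)}" using m mi that unfolding J_def by auto
      qed
      thus ?thesis unfolding F_def N0_def by simp
    qed
    thus ?case by (intro tendsto_eventually) (auto simp: eventually_sequentially)
  qed
  have Fmono: "(\<forall>x. incseq (\<lambda>n. F n x)) \<or> ((\<forall>x. decseq (\<lambda>n. F n x)) \<and> (\<integral>\<^sup>+x. F 0 x \<partial>M) < \<infinity>)"
  proof (cases "0 \<le> t")
    case True
    have "incseq (\<lambda>n. F n x)" for x
    proof (rule incseq_SucI)
      fix n
      have "J n \<subseteq> J (Suc n)" unfolding J_def by auto
      hence "card {m \<in> J n. 0 < m + int (a m x)} \<le> card {m \<in> J (Suc n). 0 < m + int (a m x)}"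
        by (intro card_mono) (auto simp: finJ)
      thus "F n x \<le> F (Suc n) x" unfolding F_def using True
        by (intro ennreal_leI) (auto intro!: mult_left_mono)
    qed
    thus ?thesis by auto
  next
    case False
    have "decseq (\<lambda>n. F n x)" for x
    proof (rule decseq_SucI)
      fix n
      have "J n \<subseteq> J (Suc n)" unfolding J_def by auto
      hence "card {m \<in> J n. 0 < m + int (a m x)} \<le> card {m \<in> J (Suc n). 0 < m + int (a m x)}"
        by (intro card_mono) (auto simp: finJ)
      thus "F (Suc n) x \<le> F n x" unfolding F_def using False
        by (intro ennreal_leI) (auto intro!: mult_left_mono_neg)
    qed
    moreover have "(\<integral>\<^sup>+x. F 0 x \<partial>M) < \<infinity>" unfolding Fint by simp
    ultimately show ?thesis by auto
  qed
  have ilim: "(\<lambda>n. \<integral>\<^sup>+x. F n x \<partial>M) \<longlonglongrightarrow> ennreal (exp t * prodinf c)"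
    unfolding Fint by (intro tendsto_ennrealI tendsto_mult tendsto_const climit)
  have main: "(\<integral>\<^sup>+ x. ennreal (exp (t * real (N0 a x))) \<partial>M) = ennreal (exp t * prodinf c)"
    by (rule mono_conv_nn[OF Fmeas Fmono Flim ilim])
  show ?thesis using cp main unfolding c_def[abs_def] by simp
qed

end
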